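(* Let $\boldsymbol\Sigma\in\mathbb R^{r\times r}$ be symmetric positive definite, $\boldsymbol\alpha\in\mathbb R^{k\times p}$, $\mathbf U\in\mathbb R^{r\times k}$ of full column rank, $\boldsymbol\beta=\mathbf U\boldsymbol\alpha$, $\mathcal B=\mathrm{span}(\boldsymbol\beta)$ and $\mathcal A=\mathrm{span}(\boldsymbol\alpha)$. Let $u=\dim\mathcal E_{\boldsymbol\Sigma}(\mathcal B)$, $\boldsymbol\Gamma\in\mathbb R^{r\times u}$ a semi-orthogonal basis of $\mathcal E_{\boldsymbol\Sigma}(\mathcal B)$ and $(\boldsymbol\Gamma,\boldsymbol\Gamma_0)$ an orthogonal matrix. Assume $\mathbf U=(\boldsymbol\Gamma\mathbf G,\boldsymbol\Gamma_0\mathbf G_0)$ where $\mathbf G\in\mathbb R^{u\times u_1}$ and $\mathbf G_0\in\mathbb R^{(r-u)\times(k-u_1)}$ both have full column rank (so $u_1\le u$). Let $\boldsymbol\Sigma_{D|S}=(\mathbf U^T\boldsymbol\Sigma^{-1}\mathbf U)^{-1}\in\mathbb R^{k\times k}$. Then $\dim\{\mathcal E_{\boldsymbol\Sigma_{D|S}}(\mathcal A)\}\le u_1\le\dim\{\mathcal E_{\boldsymbol\Sigma}(\mathcal B)\}$.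
   Context: For a symmetric matrix $\mathbf M\in\mathbb R^{m\times m}$, a subspace $\mathcal R\subseteq\mathbb R^m$ is a reducing subspace of $\mathbf M$ if $\mathbf M\mathcal R\subseteq\mathcal R$; for a subspace $\mathcal S\subseteq\mathbb R^m$, the $\mathbf M$-envelope $\mathcal E_{\mathbf M}(\mathcal S)$ is the smallest reducing subspace of $\mathbf M$ containing $\mathcal S$. Interpretation: in the model $\mathbf Y=\mathbf U\boldsymbol\alpha_0+\mathbf U\boldsymbol\alpha\mathbf X+\boldsymbol\varepsilon$, $\boldsymbol\varepsilon\sim N(0,\boldsymbol\Sigma)$, with $\mathbf Y_D=(\mathbf U^T\mathbf U)^{-1}\mathbf U^T\mathbf Y$ and $\mathbf Y_S=\mathbf U_0^T\mathbf Y$ ($\mathbf U_0$ a semi-orthogonal basis of $\mathrm{span}(\mathbf U)^\perp$), $\boldsymbol\Sigma_{D|S}$ is the conditional covariance of $\mathbf Y_D$ given $(\mathbf X,\mathbf Y_S)$. *)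

theory Defs
  imports "Jordan_Normal_Form.DL_Rank" "Jordan_Normal_Form.Gauss_Jordan_Elimination"
begin

text \<open>Matrices are JNF matrices of type real mat with explicit dimensions;
  subspaces of R^m are sets of vectors in carrier_vec m.\<close>

definition reducing_subspace :: "nat \<Rightarrow> real mat \<Rightarrow> real vec set \<Rightarrow> bool" where
  "reducing_subspace m M R \<longleftrightarrow>
     subspace class_ring R (module_vec TYPE(real) m) \<and> (\<forall>x\<in>R. M *\<^sub>v x \<in> R)"

definition envelope :: "nat \<Rightarrow> real mat \<Rightarrow> real vec set \<Rightarrow> real vec set" where
  "envelope m M S = \<Inter> {R. reducing_subspace m M R \<and> S \<subseteq> R}"

definition subspace_dim :: "nat \<Rightarrow> real vec set \<Rightarrow> nat" where
  "subspace_dim m W = vectorspace.dim class_ring ((module_vec TYPE(real) m)\<lparr>carrier := W\<rparr>)"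

definition colspan :: "nat \<Rightarrow> real mat \<Rightarrow> real vec set" where
  "colspan m A = vec_space.col_space m A"

definition hcat :: "'a mat \<Rightarrow> 'a mat \<Rightarrow> 'a mat" where
  "hcat A B = mat (dim_row A) (dim_col A + dim_col B)
     (\<lambda>(i,j). if j < dim_col A then A $$ (i,j) else B $$ (i, j - dim_col A))"

definition minv :: "real mat \<Rightarrow> real mat" where
  "minv A = the (mat_inverse A)"

definition sym_pos_def :: "nat \<Rightarrow> real mat \<Rightarrow> bool" where
  "sym_pos_def m S \<longleftrightarrow> S \<in> carrier_mat m m \<and> transpose_mat S = S \<and>
     (\<forall>x\<in>carrier_vec m. x \<noteq> 0\<^sub>v m \<longrightarrow> x \<bullet> (S *\<^sub>v x) > 0)"

end

theory Submission imports Defs begin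

lemma subspace_Inter:
  assumes "F \<noteq> {}" "\<And>X. X \<in> F \<Longrightarrow> subspace class_ring X (module_vec TYPE(real) m)"
  shows "subspace class_ring (\<Inter>F) (module_vec TYPE(real) m)"
  using assms unfolding subspace_def submodule_def
  by (auto simp: vec_vs) blast

lemma subspace_carrier: "subspace class_ring (carrier_vec m) (module_vec TYPE(real) m)"
  unfolding subspace_def submodule_def
  by (auto simp: vec_vs vec_module module_vec_simps)

lemma envelope_props:
  assumes M: "M \<in> carrier_mat m m" and S: "S \<subseteq> carrier_vec m"
  shows "reducing_subspace m M (envelope m M S)" "S \<subseteq> envelope m M S"
    "\<And>R. reducing_subspace m M R \<Longrightarrow> S \<subseteq> R \<Longrightarrow> envelope m M S \<subseteq> R"
proof -
  let ?F = "{R. reducing_subspace m M R \<and> S \<subseteq> R}"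
  have c: "carrier_vec m \<in> ?F" using M S subspace_carrier
    unfolding reducing_subspace_def by auto
  have "subspace class_ring (\<Inter>?F) (module_vec TYPE(real) m)"
    by (rule subspace_Inter) (use c in \<open>auto simp: reducing_subspace_def\<close>)
  then show "reducing_subspace m M (envelope m M S)"
    unfolding envelope_def reducing_subspace_def by auto
  show "S \<subseteq> envelope m M S" unfolding envelope_def by auto
  show "\<And>R. reducing_subspace m M R \<Longrightarrow> S \<subseteq> R \<Longrightarrow> envelope m M S \<subseteq> R"
    unfolding envelope_def by auto
qed

lemma (in vectorspace) subspace_fin_dim:
  assumes X: "subspace K X V" and fd: "fin_dim"
  shows "vectorspace.fin_dim K (vs X)"
proof -
  interpret W: vectorspace K "vs X" using subspace_is_vs[OF X] .
  have sm: "submodule K X V" using X by (simp add: subspace_def)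
  have bound: "finite A \<and> card A \<le> dim" if "A \<subseteq> carrier (vs X) \<and> W.lin_indpt A" for A
  proof -
    have AX: "A \<subseteq> X" using that by simp
    have "lin_indpt A" using that span_li_not_depend(2)[OF AX sm] by simp
    moreover have "A \<subseteq> carrier V" using AX sm by (auto simp: submodule_def)
    ultimately show ?thesis using li_le_dim[OF fd] by auto
  qed
  have "W.lin_indpt {}" by (simp add: W.finite_lin_indpt2)
  then obtain A where A: "finite A" "maximal A (\<lambda>S. S \<subseteq> carrier (vs X) \<and> W.lin_indpt S)"
    using maximal_exists[of "\<lambda>S. S \<subseteq> carrier (vs X) \<and> W.lin_indpt S" dim "{}"] bound by blast
  have "W.gen_set A" using W.max_li_is_gen[OF A(2)] .
  moreover have "A \<subseteq> carrier (vs X)" using A(2) by (auto simp: maximal_def)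
  ultimately show ?thesis unfolding W.fin_dim_def using A(1) by blast
qed


lemma dim_mono:
  assumes X: "subspace class_ring X (module_vec TYPE(real) m)"
    and W: "subspace class_ring W (module_vec TYPE(real) m)" and XW: "X \<subseteq> W"
  shows "subspace_dim m X \<le> subspace_dim m W"
proof -
  interpret vec_space "TYPE(real)" m .
  have fdW: "vectorspace.fin_dim class_ring (vs W)" using subspace_fin_dim[OF W] by simp
  have fdX: "vectorspace.fin_dim class_ring (vs X)" using subspace_fin_dim[OF X] by simp
  interpret W: vectorspace class_ring "vs W" using subspace_is_vs[OF W] .
  have sub: "subspace class_ring X (vs W)" using nested_subspaces[OF W X XW] .
  have "vectorspace.dim class_ring ((vs W)\<lparr>carrier := X\<rparr>) \<le> W.dim"
    using W.subspace_dim[OF sub fdW] fdX by simp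
  then show ?thesis unfolding subspace_dim_def by simp
qed

lemma rank_colspan: "vec_space.rank m A = subspace_dim m (colspan m A)"
  unfolding subspace_dim_def colspan_def vec_space.rank_def vec_space.col_space_def ..

lemma colspan_subspace:
  assumes "A \<in> carrier_mat m n"
  shows "subspace class_ring (colspan m A) (module_vec TYPE(real) m)"
proof -
  interpret vec_space "TYPE(real)" m .
  show ?thesis unfolding colspan_def col_space_def
    by (rule span_is_subspace) (use cols_dim[of A] assms in auto)
qed

lemma rank_le_nr:
  fixes A :: "real mat"
  assumes "A \<in> carrier_mat m n"
  shows "vec_space.rank m A \<le> m"
proof -
  interpret vec_space "TYPE(real)" m .
  have "subspace_dim m (colspan m A) \<le> subspace_dim m (carrier_vec m)"
    by (rule dim_mono[OF colspan_subspace[OF assms] subspace_carrier])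
      (use colspan_subspace[OF assms] in \<open>auto simp: subspace_def submodule_def\<close>)
  also have "subspace_dim m (carrier_vec m) = m"
  proof -
    have "vs (carrier_vec m) = V" by (simp add: module_vec_def)
    then show ?thesis unfolding subspace_dim_def using dim_is_n by metis
  qed
  finally show ?thesis using rank_colspan by metis
qed


lemma inj_imp_minv:
  fixes A :: "real mat"
  assumes A: "A \<in> carrier_mat n n" and inj: "\<And>v. v \<in> carrier_vec n \<Longrightarrow> A *\<^sub>v v = 0\<^sub>v n \<Longrightarrow> v = 0\<^sub>v n"
  shows "minv A \<in> carrier_mat n n \<and> A * minv A = 1\<^sub>m n \<and> minv A * A = 1\<^sub>m n"
proof -
  have "det A \<noteq> 0" using det_0_iff_vec_prod_zero_field[OF A] inj by auto
  then have "mat_inverse A \<noteq> None" using mat_inverse(1)[OF A, where b = "()"] det_non_zero_imp_unit[OF A, where b = "()"] by blast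
  then obtain B where "mat_inverse A = Some B" by blast
  then show ?thesis using mat_inverse(2)[OF A] unfolding minv_def by auto
qed

lemma comm_inv:
  fixes A B Ai :: "real mat"
  assumes c: "A \<in> carrier_mat n n" "B \<in> carrier_mat n n" "Ai \<in> carrier_mat n n"
    and i: "A * Ai = 1\<^sub>m n" "Ai * A = 1\<^sub>m n" and AB: "A * B = B * A"
  shows "Ai * B = B * Ai"
proof -
  have "Ai * B = Ai * B * (A * Ai)" using c i by simp
  also have "\<dots> = Ai * (B * A) * Ai" using c by (simp add: assoc_mult_mat[of _ n n _ n _ n])
  also have "\<dots> = Ai * (A * B) * Ai" using AB by simp
  also have "\<dots> = (Ai * A) * B * Ai" using c by (simp add: assoc_mult_mat[of _ n n _ n _ n])
  also have "\<dots> = B * Ai" using c i by simp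
  finally show ?thesis .
qed

lemma col_hcat:
  assumes "j < dim_col A + dim_col B" "dim_row B = dim_row A"
  shows "col (hcat A B) j = (if j < dim_col A then col A j else col B (j - dim_col A))"
  using assms unfolding hcat_def by (auto intro!: eq_vecI)

lemma hcat_carrier[simp]: "A \<in> carrier_mat m a \<Longrightarrow> B \<in> carrier_mat m b \<Longrightarrow> hcat A B \<in> carrier_mat m (a + b)"
  unfolding hcat_def by auto

lemma hcat_mult:
  assumes A: "A \<in> carrier_mat m r" and B: "B \<in> carrier_mat r b" and C: "C \<in> carrier_mat r c"
  shows "A * hcat B C = hcat (A * B) (A * C)"
proof (rule eq_matI)
  fix i j assume i: "i < dim_row (hcat (A * B) (A * C))" and j: "j < dim_col (hcat (A * B) (A * C))"
  have ij: "i < m" "j < b + c" using i j A B C unfolding hcat_def by auto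
  have "(A * hcat B C) $$ (i, j) = row A i \<bullet> col (hcat B C) j"
    using ij A B C by (simp add: hcat_def)
  also have "\<dots> = (if j < b then row A i \<bullet> col B j else row A i \<bullet> col C (j - b))"
    using col_hcat[of j B C] ij B C by auto
  also have "\<dots> = hcat (A * B) (A * C) $$ (i, j)"
    using ij A B C unfolding hcat_def by auto
  finally show "(A * hcat B C) $$ (i, j) = hcat (A * B) (A * C) $$ (i, j)" .
qed (use A B C in \<open>auto simp: hcat_def\<close>)

lemma full_rank_inj:
  fixes A :: "real mat"
  assumes A: "A \<in> carrier_mat n nc" and rk: "vec_space.rank n A = nc"
    and v: "v \<in> carrier_vec nc" and Av: "A *\<^sub>v v = 0\<^sub>v n"
  shows "v = 0\<^sub>v nc"
proof -
  interpret vec_space "TYPE(real)" n .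
  have dist: "distinct (cols A)"
  proof (rule ccontr)
    assume nd: "\<not> distinct (cols A)"
    obtain S where S: "maximal S (\<lambda>T. T \<subseteq> set (cols A) \<and> lin_indpt T)"
      using maximal_exists[of "(\<lambda>T. T \<subseteq> set (cols A) \<and> lin_indpt T)" "card (set (cols A))" "{}"]
      by (meson List.finite_set card_mono empty_iff empty_subsetI finite_lin_indpt2 rev_finite_subset)
    then have "card S \<le> card (set (cols A))" by (simp add: card_mono maximal_def)
    moreover have "card (set (cols A)) < nc"
      using nd A card_distinct card_length cols_length carrier_matD(2) nat_less_le by metis
    ultimately have "card S < nc" by simp
    then show False using rank_card_indpt[OF A S] rk by simp
  qed
  have li: "lin_indpt (set (cols A))" using full_rank_lin_indpt[OF A rk dist] .
  show ?thesis
  proof (rule ccontr)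
    assume "v \<noteq> 0\<^sub>v nc"
    then have "lin_dep (set (cols A))" using lin_depI[OF A v _ Av dist] by blast
    then show False using li by blast
  qed
qed


lemma colspan_carrier:
  fixes A :: "real mat"
  assumes "A \<in> carrier_mat m n"
  shows "colspan m A \<subseteq> carrier_vec m"
  using colspan_subspace[OF assms] by (auto simp: subspace_def submodule_def module_vec_simps)

theorem proposition4:
  fixes r k p u u1 :: nat
    and Sigma alpha U Gamma Gamma0 G G0 :: "real mat"
  assumes Sigma: "sym_pos_def r Sigma"
    and alpha: "alpha \<in> carrier_mat k p"
    and U: "U \<in> carrier_mat r k" and U_rank: "vec_space.rank r U = k"
    and u: "u = subspace_dim r (envelope r Sigma (colspan r (U * alpha)))"
    and Gamma: "Gamma \<in> carrier_mat r u"
    and Gamma_semiorth: "transpose_mat Gamma * Gamma = 1\<^sub>m u"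
    and Gamma_basis: "colspan r Gamma = envelope r Sigma (colspan r (U * alpha))"
    and Gamma0: "Gamma0 \<in> carrier_mat r (r - u)"
    and orth: "transpose_mat (hcat Gamma Gamma0) * hcat Gamma Gamma0 = 1\<^sub>m r"
              "hcat Gamma Gamma0 * transpose_mat (hcat Gamma Gamma0) = 1\<^sub>m r"
    and G: "G \<in> carrier_mat u u1" and G_rank: "vec_space.rank u G = u1"
    and G0: "G0 \<in> carrier_mat (r - u) (k - u1)" and G0_rank: "vec_space.rank (r - u) G0 = k - u1"
    and U_split: "U = hcat (Gamma * G) (Gamma0 * G0)"
  shows "subspace_dim k (envelope k (minv (transpose_mat U * minv Sigma * U)) (colspan k alpha)) \<le> u1
         \<and> u1 \<le> subspace_dim r (envelope r Sigma (colspan r (U * alpha)))"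
proof -
  have S: "Sigma \<in> carrier_mat r r" and St: "transpose_mat Sigma = Sigma"
    and Spd: "\<And>x. x \<in> carrier_vec r \<Longrightarrow> x \<noteq> 0\<^sub>v r \<Longrightarrow> x \<bullet> (Sigma *\<^sub>v x) > 0"
    using Sigma unfolding sym_pos_def_def by auto
  have second: "u1 \<le> subspace_dim r (envelope r Sigma (colspan r (U * alpha)))"
    using rank_le_nr[OF G] G_rank u by simp
  have ur: "u \<le> r"
  proof -
    have "dim_col (transpose_mat (hcat Gamma Gamma0) * hcat Gamma Gamma0) = u + (r - u)"
      using Gamma Gamma0 by (simp add: hcat_def)
    then show ?thesis using orth(1) by simp
  qed
  have uk: "u1 \<le> k"
  proof -
    have "dim_col U = u1 + (k - u1)" using U_split G G0 Gamma Gamma0 by (simp add: hcat_def)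
    then show ?thesis using U by simp
  qed
  obtain Si where Si: "Si \<in> carrier_mat r r" "Sigma * Si = 1\<^sub>m r" "Si * Sigma = 1\<^sub>m r" "minv Sigma = Si"
  proof -
    have "minv Sigma \<in> carrier_mat r r \<and> Sigma * minv Sigma = 1\<^sub>m r \<and> minv Sigma * Sigma = 1\<^sub>m r"
    proof (rule inj_imp_minv[OF S])
      fix v assume v: "v \<in> carrier_vec r" "Sigma *\<^sub>v v = 0\<^sub>v r"
      show "v = 0\<^sub>v r"
      proof (rule ccontr)
        assume "v \<noteq> 0\<^sub>v r"
        note gt = Spd[OF v(1) this]
        have "v \<bullet> (Sigma *\<^sub>v v) = 0" unfolding v(2) using v(1) by simp
        then show False using gt by simp
      qed
    qed
    then show ?thesis using that by blast
  qed
  have GtG0: "transpose_mat Gamma * Gamma0 = 0\<^sub>m u (r - u)"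
  proof (rule eq_matI)
    fix i j assume "i < dim_row (0\<^sub>m u (r - u) :: real mat)" "j < dim_col (0\<^sub>m u (r - u) :: real mat)"
    then have ij: "i < u" "j < r - u" by auto
    let ?Q = "hcat Gamma Gamma0"
    have Q: "?Q \<in> carrier_mat r (u + (r - u))" using Gamma Gamma0 by simp
    have "(transpose_mat ?Q * ?Q) $$ (i, u + j) = col ?Q i \<bullet> col ?Q (u + j)"
      using Q ij by simp
    also have "\<dots> = col Gamma i \<bullet> col Gamma0 j"
      using col_hcat[of i Gamma Gamma0] col_hcat[of "u+j" Gamma Gamma0] ij Gamma Gamma0 by simp
    also have "\<dots> = (transpose_mat Gamma * Gamma0) $$ (i, j)" using ij Gamma Gamma0 by simp
    finally have "(transpose_mat Gamma * Gamma0) $$ (i, j) = (1\<^sub>m r :: real mat) $$ (i, u + j)"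
      using orth(1) by simp
    also have "\<dots> = 0" using ij ur by simp
    finally show "(transpose_mat Gamma * Gamma0) $$ (i, j) = (0\<^sub>m u (r - u) :: real mat) $$ (i, j)"
      using ij by simp
  qed (use Gamma Gamma0 in auto)
  define env where "env = envelope r Sigma (colspan r (U * alpha))"
  have UaC: "U * alpha \<in> carrier_mat r p" using U alpha by simp
  have env_red: "reducing_subspace r Sigma env"
    unfolding env_def
    by (rule envelope_props(1)[OF S])
      (rule colspan_carrier[OF UaC])
  have env_sub: "colspan r (U * alpha) \<subseteq> env"
    unfolding env_def
    by (rule envelope_props(2)[OF S])
      (rule colspan_carrier[OF UaC])
  have colG: "env = {y \<in> carrier_vec r. \<exists>x\<in>carrier_vec u. Gamma *\<^sub>v x = y}"
    using Gamma_basis vec_space.col_space_eq[OF Gamma] Gamma unfolding env_def colspan_def by simp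
  define X where "X = transpose_mat Gamma * (Sigma * Gamma)"
  have XC: "X \<in> carrier_mat u u" using Gamma S unfolding X_def by simp
  have SG: "Sigma * Gamma = Gamma * X"
  proof (rule mat_col_eqI)
    fix j assume "j < dim_col (Gamma * X)"
    then have j: "j < u" using Gamma XC by simp
    have cj: "col Gamma j \<in> env" unfolding colG
      using Gamma j by (auto intro!: bexI[of _ "unit_vec u j"])
    then have "Sigma *\<^sub>v col Gamma j \<in> env" using env_red unfolding reducing_subspace_def by blast
    then obtain y where y: "y \<in> carrier_vec u" "Sigma *\<^sub>v col Gamma j = Gamma *\<^sub>v y"
      unfolding colG by auto
    have "col (Gamma * X) j = Gamma *\<^sub>v (transpose_mat Gamma *\<^sub>v (Sigma *\<^sub>v col Gamma j))"
    proof -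
      have c1: "col (Gamma * X) j = Gamma *\<^sub>v col X j" using col_mult2[OF Gamma XC j] .
      have c2: "col X j = transpose_mat Gamma *\<^sub>v col (Sigma * Gamma) j"
        unfolding X_def using col_mult2[of "transpose_mat Gamma" u r "Sigma * Gamma" u j] Gamma S j by simp
      have c3: "col (Sigma * Gamma) j = Sigma *\<^sub>v col Gamma j"
        using col_mult2[OF S Gamma j] .
      show ?thesis unfolding c1 c2 c3 ..
    qed
    also have "\<dots> = Gamma *\<^sub>v ((transpose_mat Gamma * Gamma) *\<^sub>v y)"
      using y Gamma by simp
    also have "\<dots> = Gamma *\<^sub>v y" using Gamma_semiorth y by simp
    also have "\<dots> = col (Sigma * Gamma) j" using col_mult2[OF S Gamma j] y(2) by metis
    finally show "col (Sigma * Gamma) j = col (Gamma * X) j" by simp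
  qed (use S Gamma XC in auto)
  define P where "P = Gamma * transpose_mat Gamma"
  have PC: "P \<in> carrier_mat r r" using Gamma unfolding P_def by simp
  have Pt: "transpose_mat P = P" using Gamma unfolding P_def by (simp add: transpose_mult[of _ r u])
  have Xt: "transpose_mat X = X"
  proof -
    have "transpose_mat X = transpose_mat (Sigma * Gamma) * Gamma"
      unfolding X_def using transpose_mult[of "transpose_mat Gamma" u r "Sigma * Gamma" u] Gamma S by simp
    also have "\<dots> = (transpose_mat Gamma * Sigma) * Gamma"
      using transpose_mult[of Sigma r r Gamma u] Gamma S St by simp
    also have "\<dots> = X" unfolding X_def using Gamma S by (simp add: assoc_mult_mat[of _ u r _ r _ u])
    finally show ?thesis .
  qed
  have SP: "Sigma * P = P * Sigma"
  proof -
    have e: "Sigma * P = Gamma * X * transpose_mat Gamma"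
      unfolding P_def using SG Gamma S XC by (simp add: assoc_mult_mat[of _ r r _ u _ r, symmetric])
    have "transpose_mat (Sigma * P) = P * Sigma"
      using S PC St Pt by (simp add: transpose_mult[of _ r r])
    moreover have "transpose_mat (Gamma * X * transpose_mat Gamma) = Gamma * X * transpose_mat Gamma"
    proof -
      have "transpose_mat (Gamma * X * transpose_mat Gamma) = Gamma * transpose_mat (Gamma * X)"
        using transpose_mult[of "Gamma * X" r u "transpose_mat Gamma" r] Gamma XC by simp
      also have "\<dots> = Gamma * (X * transpose_mat Gamma)"
        using transpose_mult[of Gamma r u X u] Gamma XC Xt by simp
      also have "\<dots> = Gamma * X * transpose_mat Gamma"
        using Gamma XC by (simp add: assoc_mult_mat[of _ r u _ u _ r])
      finally show ?thesis .
    qed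
    ultimately show ?thesis using e by simp
  qed
  have SiP: "Si * P = P * Si" using comm_inv[OF S PC Si(1) Si(2) Si(3) SP] .
  define D :: "real mat" where "D = mat k k (\<lambda>(i,j). if i = j \<and> i < u1 then 1 else 0)"
  have DC: "D \<in> carrier_mat k k" unfolding D_def by simp
  have Dt: "transpose_mat D = D" unfolding D_def by (auto intro!: eq_matI)
  have colD: "col D j = (if j < u1 then unit_vec k j else 0\<^sub>v k)" if "j < k" for j
    using that unfolding D_def by (auto intro!: eq_vecI simp: unit_vec_def)
  have AD: "(A * D) $$ (i, j) = (if j < u1 then A $$ (i, j) else 0)"
    if "A \<in> carrier_mat m k" "i < m" "j < k" for A :: "real mat" and m i j
  proof -
    have "(A * D) $$ (i, j) = row A i \<bullet> col D j" using that DC by simp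
    also have "\<dots> = (if j < u1 then A $$ (i, j) else 0)"
      using colD[OF that(3)] that by auto
    finally show ?thesis .
  qed
  have GG: "Gamma * G \<in> carrier_mat r u1" using Gamma G by simp
  have GG0: "Gamma0 * G0 \<in> carrier_mat r (k - u1)" using Gamma0 G0 by simp
  have PU: "P * U = hcat (Gamma * G) (0\<^sub>m r (k - u1))"
  proof -
    have "P * U = hcat (P * (Gamma * G)) (P * (Gamma0 * G0))"
      unfolding U_split by (rule hcat_mult[OF PC GG GG0])
    moreover have "P * (Gamma * G) = Gamma * G"
    proof -
      have "P * (Gamma * G) = Gamma * ((transpose_mat Gamma * Gamma) * G)"
        unfolding P_def using Gamma G by (simp add: assoc_mult_mat[of _ r u _ r _ u1] assoc_mult_mat[of _ u r _ u _ u1])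
      then show ?thesis using Gamma_semiorth G by simp
    qed
    moreover have "P * (Gamma0 * G0) = 0\<^sub>m r (k - u1)"
    proof -
      have "P * (Gamma0 * G0) = Gamma * ((transpose_mat Gamma * Gamma0) * G0)"
        unfolding P_def using Gamma Gamma0 G0
        by (simp add: assoc_mult_mat[of _ r u _ r _ "k - u1"] assoc_mult_mat[of _ u r _ "r - u" _ "k-u1"])
      then show ?thesis using GtG0 G0 Gamma by simp
    qed
    ultimately show ?thesis by simp
  qed
  have UD: "U * D = P * U"
  proof (rule eq_matI)
    fix i j assume ij: "i < dim_row (P * U)" "j < dim_col (P * U)"
    then have ij': "i < r" "j < k" using PC U by auto
    have a: "(U * D) $$ (i,j) = (if j<u1 then U$$(i,j) else 0)" by (rule AD[OF U ij'])
    have b: "hcat (Gamma*G) (0\<^sub>m r (k-u1)) $$ (i,j) = (if j<u1 then (Gamma*G)$$(i,j) else 0)"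
      using ij' uk GG Gamma G by (simp add: hcat_def)
    have c: "U$$(i,j) = (Gamma*G)$$(i,j)" if "j < u1"
      using ij' GG GG0 uk that Gamma G Gamma0 G0 unfolding U_split by (simp add: hcat_def)
    show "(U * D) $$ (i, j) = (P * U) $$ (i, j)"
      unfolding PU a b using c by simp
  qed (use U PC DC in auto)
  define N where "N = transpose_mat U * Si * U"
  have NC: "N \<in> carrier_mat k k" unfolding N_def using U Si by simp
  have DUt: "D * transpose_mat U = transpose_mat U * P"
  proof -
    have "D * transpose_mat U = transpose_mat (U * D)"
      using transpose_mult[of U r k D k] U DC Dt by simp
    also have "\<dots> = transpose_mat U * P" unfolding UD
      using transpose_mult[of P r r U k] U PC Pt by simp
    finally show ?thesis .
  qed
  have DN: "D * N = N * D"
  proof -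
    have "D * N = ((D * transpose_mat U) * Si) * U" unfolding N_def using U DC Si
      by (simp add: assoc_mult_mat[of _ k k _ r _ k] assoc_mult_mat[of _ k k _ r _ r])
    also have "\<dots> = (transpose_mat U * (P * Si)) * U" unfolding DUt using U PC Si
      by (simp add: assoc_mult_mat[of _ k r _ r _ r])
    also have "\<dots> = ((transpose_mat U * Si) * P) * U" unfolding SiP[symmetric] using U PC Si
      by (simp add: assoc_mult_mat[of _ k r _ r _ r])
    also have "\<dots> = (transpose_mat U * Si) * (U * D)" unfolding UD using U PC Si
      by (simp add: assoc_mult_mat[of _ k r _ r _ k])
    also have "\<dots> = N * D" unfolding N_def using U DC Si
      by (simp add: assoc_mult_mat[of _ k r _ k _ k] assoc_mult_mat[of _ k r _ r _ k])
    finally show ?thesis .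
  qed
  have Sipd: "y \<bullet> (Si *\<^sub>v y) > 0" if y: "y \<in> carrier_vec r" "y \<noteq> 0\<^sub>v r" for y
  proof -
    define z where "z = Si *\<^sub>v y"
    have zC: "z \<in> carrier_vec r" unfolding z_def using Si y by simp
    have Sz: "Sigma *\<^sub>v z = y" unfolding z_def
      using Si y S by (simp add: assoc_mult_mat_vec[of Sigma r r Si r y, symmetric])
    have "z \<noteq> 0\<^sub>v r" using Sz y S by auto
    then have "z \<bullet> (Sigma *\<^sub>v z) > 0" using Spd zC by simp
    moreover have "y \<bullet> (Si *\<^sub>v y) = z \<bullet> (Sigma *\<^sub>v z)"
      using Sz zC y S comm_scalar_prod[of y r z] unfolding z_def[symmetric] by simp
    ultimately show ?thesis by simp
  qed
  have Ninj: "x = 0\<^sub>v k" if x: "x \<in> carrier_vec k" "N *\<^sub>v x = 0\<^sub>v k" for x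
  proof -
    define y where "y = U *\<^sub>v x"
    have yC: "y \<in> carrier_vec r" unfolding y_def using U x by simp
    have Nx: "N *\<^sub>v x = transpose_mat U *\<^sub>v (Si *\<^sub>v y)"
      unfolding N_def y_def using U Si x
      by (simp add: assoc_mult_mat_vec[of _ k r _ k] assoc_mult_mat_vec[of _ k r _ r])
    have "0 = x \<bullet> (N *\<^sub>v x)" using x by simp
    also have "\<dots> = (transpose_mat U *\<^sub>v (Si *\<^sub>v y)) \<bullet> x"
      unfolding Nx using x U Si yC by (simp add: comm_scalar_prod[of x k])
    also have "\<dots> = (Si *\<^sub>v y) \<bullet> y"
      using transpose_vec_mult_scalar[OF U x(1), of "Si *\<^sub>v y"] Si yC unfolding y_def by simp
    also have "\<dots> = y \<bullet> (Si *\<^sub>v y)" using Si yC by (simp add: comm_scalar_prod[of _ r])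
    finally have "y \<bullet> (Si *\<^sub>v y) = 0" by simp
    then have "y = 0\<^sub>v r" using Sipd yC by fastforce
    then show ?thesis using full_rank_inj[OF U U_rank x(1)] unfolding y_def by simp
  qed
  obtain M where M: "M \<in> carrier_mat k k" "N * M = 1\<^sub>m k" "M * N = 1\<^sub>m k"
    "minv (transpose_mat U * minv Sigma * U) = M"
    using inj_imp_minv[OF NC Ninj] unfolding N_def Si(4) by blast
  have MD: "M * D = D * M" using comm_inv[OF NC DC M(1) M(2) M(3) DN[symmetric]] .
  define L where "L = M * transpose_mat U * Si"
  have LC: "L \<in> carrier_mat k r" unfolding L_def using M U Si by simp
  have LU: "L * U = 1\<^sub>m k"
    unfolding L_def using M U Si unfolding N_def[symmetric]
    by (simp add: assoc_mult_mat[of _ k r _ r _ k] assoc_mult_mat[of _ k k _ r _ k] N_def)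
  have PUa: "P * (U * alpha) = U * alpha"
  proof (rule mat_col_eqI)
    fix j assume "j < dim_col (U * alpha)"
    then have j: "j < p" using alpha by simp
    have uv: "U * alpha *\<^sub>v unit_vec p j = col (U * alpha) j"
      by (rule eq_vecI) (use UaC j in auto)
    have "col (U * alpha) j \<in> colspan r (U * alpha)"
      unfolding colspan_def vec_space.col_space_eq[OF UaC] using UaC j U uv
      by (auto intro!: bexI[of _ "unit_vec p j"])
    then have "col (U * alpha) j \<in> env" using env_sub by blast
    then obtain y where y: "y \<in> carrier_vec u" "col (U * alpha) j = Gamma *\<^sub>v y"
      unfolding colG by auto
    have "col (P * (U * alpha)) j = P *\<^sub>v col (U * alpha) j"
      using col_mult2[OF PC UaC j] .
    also have "\<dots> = Gamma *\<^sub>v ((transpose_mat Gamma * Gamma) *\<^sub>v y)"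
      unfolding y(2) P_def using Gamma y by simp
    also have "\<dots> = col (U * alpha) j" using Gamma_semiorth y by simp
    finally show "col (P * (U * alpha)) j = col (U * alpha) j" .
  qed (use PC UaC in auto)
  have Da: "D * alpha = alpha"
  proof -
    have UDa: "U * (D * alpha) = U * alpha"
    proof -
      have "U * (D * alpha) = (U * D) * alpha" using U DC alpha by simp
      also have "\<dots> = P * (U * alpha)" unfolding UD using PC U alpha by simp
      finally show ?thesis using PUa by simp
    qed
    have "D * alpha = (L * U) * (D * alpha)" using LU DC alpha by simp
    also have "\<dots> = L * (U * (D * alpha))"
      using LC U DC alpha by (simp add: assoc_mult_mat[of L k r U k "D * alpha" p])
    also have "\<dots> = L * (U * alpha)" using UDa by simp
    also have "\<dots> = alpha" using LC U alpha LU by (simp add: assoc_mult_mat[of L k r U k alpha p, symmetric])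
    finally show ?thesis .
  qed
  define E :: "real mat" where "E = mat k u1 (\<lambda>(i,j). if i = j then 1 else 0)"
  have EC: "E \<in> carrier_mat k u1" unfolding E_def by simp
  have rowD: "row D i = (if i < u1 then unit_vec k i else 0\<^sub>v k)" if "i < k" for i
    using that unfolding D_def by (auto intro!: eq_vecI simp: unit_vec_def)
  have Dv: "(D *\<^sub>v v) $ i = (if i < u1 then v $ i else 0)" if "v \<in> carrier_vec k" "i < k" for v i
    using that DC rowD[OF that(2)] by auto
  have rowE: "row E i = (if i < u1 then unit_vec u1 i else 0\<^sub>v u1)" if "i < k" for i
    using that unfolding E_def by (auto intro!: eq_vecI simp: unit_vec_def)
  have Ev: "(E *\<^sub>v v) $ i = (if i < u1 then v $ i else 0)" if "v \<in> carrier_vec u1" "i < k" for v i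
    using that EC rowE[OF that(2)] by auto
  define R where "R = colspan k E"
  have Rchar: "R = {v \<in> carrier_vec k. D *\<^sub>v v = v}"
  proof -
    have "R = {y \<in> carrier_vec k. \<exists>x\<in>carrier_vec u1. E *\<^sub>v x = y}"
      unfolding R_def colspan_def using vec_space.col_space_eq[OF EC] EC by simp
    also have "\<dots> = {v \<in> carrier_vec k. D *\<^sub>v v = v}"
    proof (intro equalityI subsetI)
      fix y assume "y \<in> {y \<in> carrier_vec k. \<exists>x\<in>carrier_vec u1. E *\<^sub>v x = y}"
      then obtain x where x: "x \<in> carrier_vec u1" "y = E *\<^sub>v x" "y \<in> carrier_vec k" by auto
      have "D *\<^sub>v y = y"
        by (rule eq_vecI) (use x DC EC Dv Ev in auto)
      then show "y \<in> {v \<in> carrier_vec k. D *\<^sub>v v = v}" using x by simp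
    next
      fix v assume "v \<in> {v \<in> carrier_vec k. D *\<^sub>v v = v}"
      then have v: "v \<in> carrier_vec k" "D *\<^sub>v v = v" by auto
      define x where "x = vec u1 (\<lambda>i. v $ i)"
      have xC: "x \<in> carrier_vec u1" unfolding x_def by simp
      have "E *\<^sub>v x = v"
      proof (rule eq_vecI)
        fix i assume "i < dim_vec v"
        then have i: "i < k" using v by simp
        have "v $ i = (D *\<^sub>v v) $ i" using v by simp
        then show "(E *\<^sub>v x) $ i = v $ i"
          using Ev[OF xC i] Dv[OF v(1) i] unfolding x_def by auto
      qed (use v EC in simp)
      then show "v \<in> {y \<in> carrier_vec k. \<exists>x\<in>carrier_vec u1. E *\<^sub>v x = y}" using v xC by blast
    qed
    finally show ?thesis .
  qed
  have R_red: "reducing_subspace k M R"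
    unfolding reducing_subspace_def
  proof
    show "subspace class_ring R (module_vec TYPE(real) k)" unfolding R_def by (rule colspan_subspace[OF EC])
    show "\<forall>x\<in>R. M *\<^sub>v x \<in> R"
    proof
      fix x assume "x \<in> R"
      then have x: "x \<in> carrier_vec k" "D *\<^sub>v x = x" unfolding Rchar by auto
      have "D *\<^sub>v (M *\<^sub>v x) = (D * M) *\<^sub>v x" using DC M x by simp
      also have "\<dots> = M *\<^sub>v (D *\<^sub>v x)" unfolding MD[symmetric] using DC M x by simp
      finally show "M *\<^sub>v x \<in> R" unfolding Rchar using x M by simp
    qed
  qed
  have aC: "colspan k alpha \<subseteq> carrier_vec k" by (rule colspan_carrier[OF alpha])
  have aR: "colspan k alpha \<subseteq> R"
  proof
    fix y assume "y \<in> colspan k alpha"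
    then obtain w where w: "w \<in> carrier_vec p" "y = alpha *\<^sub>v w"
      unfolding colspan_def vec_space.col_space_eq[OF alpha] using alpha by auto
    have "D *\<^sub>v y = (D * alpha) *\<^sub>v w" using w DC alpha by simp
    then show "y \<in> R" unfolding Rchar Da using w alpha by simp
  qed
  define envk where "envk = envelope k M (colspan k alpha)"
  have envk_red: "reducing_subspace k M envk" unfolding envk_def by (rule envelope_props(1)[OF M(1) aC])
  have envkR: "envk \<subseteq> R" unfolding envk_def by (rule envelope_props(3)[OF M(1) aC R_red aR])
  have "subspace_dim k envk \<le> subspace_dim k R"
    by (rule dim_mono) (use envk_red R_red envkR in \<open>auto simp: reducing_subspace_def\<close>)
  also have "\<dots> = vec_space.rank k E" unfolding R_def by (rule rank_colspan[symmetric])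
  also have "\<dots> \<le> u1" by (rule vec_space.rank_le_nc[OF EC])
  finally have first: "subspace_dim k envk \<le> u1" .
  show ?thesis using first second M(4) unfolding envk_def by simp
qed
end
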